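(* Let $X>0$ and let $w:[0,X]\to\mathbb{R}$ be a smooth function with $w''(x)\ge w(x)$ and $w(x)\ge0$ for all $x\in[0,X]$, and $w'(0)\ge0$. Let $p:[0,X]\to\mathbb{R}^+$ be a decreasing integrable function. Then \[\int_0^Xp(x)w(x)\,dx\le\Big(\frac{p(0)}{\cosh(X/2)}+p(X/2)\Big)\int_0^Xw(x)\,dx.\] *)

theory Defs
  imports "HOL-Analysis.Analysis"
begin

definition smooth_on_with :: "(real \<Rightarrow> real) \<Rightarrow> (nat \<Rightarrow> real \<Rightarrow> real) \<Rightarrow> real set \<Rightarrow> bool" where
  "smooth_on_with f D S \<longleftrightarrow>
     (\<forall>x\<in>S. D 0 x = f x) \<and>
     (\<forall>n. \<forall>x\<in>S. (D n has_real_derivative D (Suc n) x) (at x within S))"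

end

theory Submission
  imports Defs
begin

lemma mono_helper:
  fixes f f' :: "real \<Rightarrow> real"
  assumes "a \<le> b" "\<And>x. x \<in> {a..b} \<Longrightarrow> (f has_real_derivative f' x) (at x within {a..b})"
    "\<And>x. x\<in>{a..b} \<Longrightarrow> f' x \<ge> 0"
  shows "f a \<le> f b"
proof -
  have "continuous_on {a..b} f" unfolding continuous_on_eq_continuous_within
    using assms(2) DERIV_continuous by blast
  moreover have "\<exists>y. DERIV f x :> y \<and> y \<ge> 0" if "a<x" "x<b" for x
    using assms(2)[of x] assms(3)[of x] that at_within_Icc_at[of a x b] by force
  ultimately show ?thesis using DERIV_nonneg_imp_increasing_open[OF assms(1)] by blast
qed

lemma mono_sub:
  fixes f f' :: "real \<Rightarrow> real"
  assumes "a \<le> c" "c \<le> d" "d \<le> b" "\<And>x. x \<in> {a..b} \<Longrightarrow> (f has_real_derivative f' x) (at x within {a..b})"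
    "\<And>x. x\<in>{c..d} \<Longrightarrow> f' x \<ge> 0"
  shows "f c \<le> f d"
proof (rule mono_helper[of c d f f'])
  fix x assume x: "x \<in> {c..d}"
  have "{c..d} \<subseteq> {a..b}" using assms by auto
  then show "(f has_real_derivative f' x) (at x within {c..d})"
    using assms(4)[of x] x DERIV_subset by blast
qed (use assms in auto)

lemma pointwise:
  fixes X :: real and D :: "nat \<Rightarrow> real \<Rightarrow> real"
  assumes "X > 0"
    and d: "\<And>n x. x \<in> {0..X} \<Longrightarrow> (D n has_real_derivative D (Suc n) x) (at x within {0..X})"
    and w2: "\<And>x. x\<in>{0..X} \<Longrightarrow> D 2 x \<ge> D 0 x"
    and w0: "\<And>x. x\<in>{0..X} \<Longrightarrow> D 0 x \<ge> 0"
    and "D 1 0 \<ge> 0"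
    and y: "0 \<le> y" "y + h \<le> X" "0 \<le> h"
  shows "cosh h * D 0 y \<le> D 0 (y + h)"
proof -
  have d1: "D 1 y \<ge> 0"
  proof -
    have "D 1 0 \<le> D 1 y"
    proof (rule mono_sub[of 0 0 y X _ "D 2"])
      fix x assume "x \<in> {0..X}"
      then show "(D 1 has_real_derivative D 2 x) (at x within {0..X})"
        using d[of x 1] by (simp add: numeral_2_eq_2)
    next
      fix x assume "x \<in> {0..y}"
      then have "x \<in> {0..X}" using y by auto
      then show "D 2 x \<ge> 0" using w2 w0 by (meson order_trans)
    qed (use y in auto)
    then show ?thesis using assms(5) by linarith
  qed
  define G where "G t = D 1 t * cosh (t - y) - D 0 t * sinh (t - y)" for t
  define G' where "G' t = (D 2 t - D 0 t) * cosh (t - y)" for t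
  have dG: "(G has_real_derivative G' t) (at t within {0..X})" if "t \<in> {0..X}" for t
  proof -
    have a: "(D 1 has_real_derivative D 2 t) (at t within {0..X})" using d[of t 1] that
      by (simp add: numeral_2_eq_2)
    have b: "(D 0 has_real_derivative D 1 t) (at t within {0..X})" using d[of t 0] that by simp
    show ?thesis unfolding G_def
      by (rule derivative_eq_intros a b refl | simp add: G'_def algebra_simps)+
  qed
  have Gpos: "G t \<ge> 0" if "t \<in> {y..y+h}" for t
  proof -
    have "G y \<le> G t"
      by (rule mono_sub[of 0 y t X G G']) (use that y dG w2 in \<open>auto simp: G'_def\<close>)
    moreover have "G y = D 1 y" by (simp add: G_def)
    ultimately show ?thesis using d1 by linarith
  qed
  define H where "H t = D 0 t / cosh (t - y)" for t
  define H' where "H' t = G t / (cosh (t - y))^2" for t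
  have dH: "(H has_real_derivative H' t) (at t within {0..X})" if "t \<in> {0..X}" for t
  proof -
    have b: "(D 0 has_real_derivative D 1 t) (at t within {0..X})" using d[of t 0] that by simp
    have c: "cosh (t - y) \<noteq> 0" by (metis cosh_real_pos less_irrefl)
    show ?thesis unfolding H_def
      by (rule derivative_eq_intros b refl | use c in \<open>simp add: H'_def G_def power2_eq_square field_simps\<close>)+
  qed
  have "H y \<le> H (y + h)"
    by (rule mono_sub[of 0 y "y+h" X H H']) (use y dH Gpos in \<open>auto simp: H'_def\<close>)
  then have "D 0 y \<le> D 0 (y+h) / cosh h" by (simp add: H_def)
  then show ?thesis by (simp add: field_simps cosh_real_pos)
qed


theorem proposition5p4:
  fixes X :: real and w p :: "real \<Rightarrow> real" and D :: "nat \<Rightarrow> real \<Rightarrow> real"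
  assumes "X > 0"
    and "smooth_on_with w D {0..X}"
    and "\<forall>x\<in>{0..X}. D 2 x \<ge> w x"
    and "\<forall>x\<in>{0..X}. w x \<ge> 0"
    and "D 1 0 \<ge> 0"
    and "\<forall>x\<in>{0..X}. p x > 0"
    and "\<forall>x\<in>{0..X}. \<forall>y\<in>{0..X}. x \<le> y \<longrightarrow> p y \<le> p x"
    and "p integrable_on {0..X}"
  shows "integral {0..X} (\<lambda>x. p x * w x)
           \<le> (p 0 / cosh (X / 2) + p (X / 2)) * integral {0..X} w"
proof -
  define h where "h = X / 2"
  have hX: "h + h = X" "0 < h" "h < X" using assms(1) by (auto simp: h_def)
  have wD: "\<And>x. x \<in> {0..X} \<Longrightarrow> D 0 x = w x" using assms(2) by (simp add: smooth_on_with_def)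
  have d: "\<And>n x. x \<in> {0..X} \<Longrightarrow> (D n has_real_derivative D (Suc n) x) (at x within {0..X})"
    using assms(2) by (simp add: smooth_on_with_def)
  have w0: "\<And>x. x \<in> {0..X} \<Longrightarrow> w x \<ge> 0" using assms(4) by auto
  have pos: "\<And>x. x \<in> {0..X} \<Longrightarrow> D 0 x \<ge> 0" using w0 wD by auto
  have w2: "\<And>x. x \<in> {0..X} \<Longrightarrow> D 2 x \<ge> D 0 x" using assms(3) wD by auto
  have pt: "cosh h * w y \<le> w (h + y)" if "y \<in> {0..h}" for y
  proof -
    have "cosh h * D 0 y \<le> D 0 (y + h)"
      by (rule pointwise[OF assms(1) d w2 pos assms(5)]) (use that hX in auto)
    moreover have "D 0 y = w y" "D 0 (y+h) = w (h + y)" using that hX wD by (auto simp: add.commute)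
    ultimately show ?thesis by simp
  qed
  have contD: "continuous_on {0..X} (D 0)" unfolding continuous_on_eq_continuous_within
    using d DERIV_continuous by blast
  have intD: "D 0 integrable_on {0..X}" using contD integrable_continuous_interval by blast
  have intw: "w integrable_on {0..X}"
    using intD wD by (rule integrable_eq)
  have Inn: "integral {0..X} w \<ge> 0" using w0 by (intro integral_nonneg intw) auto
  have c1: "cosh h \<ge> 1" by (rule cosh_real_ge_1)
  have RHSnn: "0 \<le> (p 0 / cosh (X / 2) + p (X / 2)) * integral {0..X} w"
    using assms(6) hX Inn by (intro mult_nonneg_nonneg add_nonneg_nonneg) (auto simp: h_def less_imp_le)
  show ?thesis
  proof (cases "(\<lambda>x. p x * w x) integrable_on {0..X}")
    case False
    then show ?thesis using RHSnn by (simp add: not_integrable_integral)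
  next
    case True
    define A where "A = integral {0..h} w"
    define B where "B = integral {h..X} w"
    have intA: "w integrable_on {0..h}" by (rule integrable_subinterval_real[OF intw]) (use hX in auto)
    have intB: "w integrable_on {h..X}" by (rule integrable_subinterval_real[OF intw]) (use hX in auto)
    have IAB: "integral {0..X} w = A + B" unfolding A_def B_def
      using Henstock_Kurzweil_Integration.integral_combine[where a=0 and c=h and b=X and f=w] hX intw by auto
    have L: "integral {0..X} (\<lambda>x. p x * w x) = integral {0..h} (\<lambda>x. p x * w x) + integral {h..X} (\<lambda>x. p x * w x)"
      using Henstock_Kurzweil_Integration.integral_combine[where a=0 and c=h and b=X and f="\<lambda>x. p x * w x"] hX True by auto
    have L1: "integral {0..h} (\<lambda>x. p x * w x) \<le> p 0 * A"
    proof -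
      have "integral {0..h} (\<lambda>x. p x * w x) \<le> integral {0..h} (\<lambda>x. p 0 * w x)"
      proof (rule integral_le)
        show "(\<lambda>x. p x * w x) integrable_on {0..h}"
          by (rule integrable_subinterval_real[OF True]) (use hX in auto)
        show "(\<lambda>x. p 0 * w x) integrable_on {0..h}" using integrable_on_cmult_left[OF intA, of "p 0"] by simp
        fix x assume x: "x \<in> {0..h}"
        then have xX: "x \<in> {0..X}" using hX by auto
        have "p x \<le> p 0" using assms(7) xX hX by auto
        then show "p x * w x \<le> p 0 * w x" using w0[OF xX] by (simp add: mult_right_mono)
      qed
      also have "\<dots> = p 0 * A" unfolding A_def using integral_mult[OF intA, of "p 0"] by simp
      finally show ?thesis .
    qed
    have L2: "integral {h..X} (\<lambda>x. p x * w x) \<le> p h * B"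
    proof -
      have "integral {h..X} (\<lambda>x. p x * w x) \<le> integral {h..X} (\<lambda>x. p h * w x)"
      proof (rule integral_le)
        show "(\<lambda>x. p x * w x) integrable_on {h..X}"
          by (rule integrable_subinterval_real[OF True]) (use hX in auto)
        show "(\<lambda>x. p h * w x) integrable_on {h..X}" using integrable_on_cmult_left[OF intB, of "p h"] by simp
        fix x assume x: "x \<in> {h..X}"
        then have xX: "x \<in> {0..X}" using hX by auto
        have "p x \<le> p h" using assms(7) xX x hX by auto
        then show "p x * w x \<le> p h * w x" using w0[OF xX] by (simp add: mult_right_mono)
      qed
      also have "\<dots> = p h * B" unfolding B_def using integral_mult[OF intB, of "p h"] by simp
      finally show ?thesis .
    qed
    have BA: "cosh h * A \<le> B"
    proof -
      have "cosh h * A = integral {0..h} (\<lambda>x. cosh h * w x)"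
        unfolding A_def using integral_mult[OF intA, of "cosh h"] by simp
      also have "\<dots> \<le> integral {0..h} (w \<circ> (+) h)"
      proof (rule integral_le)
        show "(\<lambda>x. cosh h * w x) integrable_on {0..h}"
          using integrable_on_cmult_left[OF intA, of "cosh h"] by simp
        show "(w \<circ> (+) h) integrable_on {0..h}"
          using intB hX by (simp add: integrable_on_shift_Icc_real)
        fix x assume "x \<in> {0..h}" then show "cosh h * w x \<le> (w \<circ> (+) h) x" using pt by simp
      qed
      also have "\<dots> = B" unfolding B_def using hX by (simp add: integral_shift_Icc_real)
      finally show ?thesis .
    qed
    have Ann: "A \<ge> 0" unfolding A_def using w0 hX by (intro integral_nonneg intA) auto
    have p0: "p 0 > 0" "p h > 0" using assms(6) hX by auto
    have key: "A \<le> (A + B) / cosh h"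
    proof -
      have "cosh h * A \<le> A + B" using BA Ann by linarith
      then show ?thesis by (simp add: field_simps)
    qed
    have "p 0 * A + p h * B \<le> (p 0 / cosh h + p h) * (A + B)"
    proof -
      have "p 0 * A \<le> p 0 * ((A + B) / cosh h)" using mult_left_mono[OF key, of "p 0"] p0 by simp
      moreover have "p h * B \<le> p h * (A + B)" using Ann p0 by (simp add: mult_left_mono)
      ultimately show ?thesis by (simp add: algebra_simps)
    qed
    then show ?thesis using L L1 L2 IAB by (simp add: h_def)
  qed
qed

end
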